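(* Let $T$ be a rooted tree whose leaves are the keys $[n]=\{1,\dots,n\}$, and for each node $v$ of $T$ let $R_v$ be the set of leaves in the subtree of $v$. Let $p=(p_1,\dots,p_n)\in[0,1]^n$ with $\sum_i p_i$ an integer. Let $S$ be the random output of the hierarchy summarization procedure applied to $T$ and $p$. Then the distribution of $S$ is VarOpt for $p$, and for every node $v$ of $T$, with probability one, $|S\cap R_v|\in\{\lfloor p(R_v)\rfloor,\lceil p(R_v)\rceil\}$, where $p(R)=\sum_{i\in R}p_i$. In particular the maximum range discrepancy over the ranges $\{R_v\}$ is less than $1$.
   Context: Pair-Aggregate$(p,i,j)$, for indices $i\ne j$ with $0<p_i,p_j<1$, modifies only entries $i,j$ of the current vector $p$: if $p_i+p_j<1$, then with probability $p_i/(p_i+p_j)$ set $(p_i,p_j)\leftarrow(p_i+p_j,0)$ and otherwise set $(p_i,p_j)\leftarrow(0,p_i+p_j)$; if $p_i+p_j\ge 1$, then with probability $(1-p_j)/(2-p_i-p_j)$ set $(p_i,p_j)\leftarrow(1,p_i+p_j-1)$ and otherwise set $(p_i,p_j)\leftarrow(p_i+p_j-1,1)$ (independent fresh randomness each call). The hierarchy summarization procedure: starting from the vector $p$, as long as there are at least two indices whose current value lies in $(0,1)$, choose a pair $i\ne j$ of such indices whose lowest common ancestor $\mathrm{LCA}(i,j)$ in $T$ is lowest, i.e. there is no other pair of indices with current values in $(0,1)$ whose LCA is a proper descendant of $\mathrm{LCA}(i,j)$ (ties broken arbitrarily), and apply Pair-Aggregate to it; at termination output $S=\{i: p_i=1\}$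 for the final vector. A distribution over subsets $S\subseteq[n]$ is VarOpt for $p$ if $\Pr[i\in S]=p_i$ for all $i$, $|S|=\sum_ip_i$ with probability one, and for every $J\subseteq[n]$, $\Pr[J\subseteq S]\le\prod_{i\in J}p_i$ and $\Pr[J\cap S=\emptyset]\le\prod_{i\in J}(1-p_i)$. The maximum range discrepancy over a family of ranges $\mathcal{R}$ is $\max_{S}\max_{R\in\mathcal{R}}\big||S\cap R|-p(R)\big|$ over $S$ in the support. *)

theory Defs
  imports "HOL-Probability.Probability"
begin

definition is_anc :: "('v \<Rightarrow> 'v) \<Rightarrow> 'v \<Rightarrow> 'v \<Rightarrow> bool" where
  "is_anc par u v \<longleftrightarrow> (\<exists>k. (par ^^ k) v = u)"

definition rooted_tree :: "'v set \<Rightarrow> 'v \<Rightarrow> ('v \<Rightarrow> 'v) \<Rightarrow> bool" where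
  "rooted_tree V r par \<longleftrightarrow> finite V \<and> r \<in> V \<and> par r = r \<and>
     (\<forall>v\<in>V. v \<noteq> r \<longrightarrow> par v \<in> V \<and> par v \<noteq> v) \<and>
     (\<forall>v\<in>V. is_anc par r v)"

definition tree_leaves :: "'v set \<Rightarrow> 'v \<Rightarrow> ('v \<Rightarrow> 'v) \<Rightarrow> 'v set" where
  "tree_leaves V r par = {v\<in>V. \<not> (\<exists>w\<in>V. w \<noteq> r \<and> par w = v)}"

text \<open>R_v: the keys whose leaf lies in the subtree of v (leaf of key i is lf i).\<close>
definition subtree_keys :: "('v \<Rightarrow> 'v) \<Rightarrow> (nat \<Rightarrow> 'v) \<Rightarrow> nat \<Rightarrow> 'v \<Rightarrow> nat set" where
  "subtree_keys par lf n v = {i\<in>{1..n}. is_anc par v (lf i)}"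

definition lca :: "'v set \<Rightarrow> ('v \<Rightarrow> 'v) \<Rightarrow> (nat \<Rightarrow> 'v) \<Rightarrow> nat \<Rightarrow> nat \<Rightarrow> 'v" where
  "lca V par lf i j = (THE w. w \<in> V \<and> is_anc par w (lf i) \<and> is_anc par w (lf j) \<and>
      (\<forall>u\<in>V. is_anc par u (lf i) \<and> is_anc par u (lf j) \<longrightarrow> is_anc par u w))"

definition proper_desc :: "('v \<Rightarrow> 'v) \<Rightarrow> 'v \<Rightarrow> 'v \<Rightarrow> bool" where
  "proper_desc par u w \<longleftrightarrow> is_anc par w u \<and> u \<noteq> w"

definition frac :: "nat \<Rightarrow> (nat \<Rightarrow> real) \<Rightarrow> nat set" where
  "frac n q = {i\<in>{1..n}. 0 < q i \<and> q i < 1}"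

definition pair_aggregate :: "(nat \<Rightarrow> real) \<Rightarrow> nat \<Rightarrow> nat \<Rightarrow> (nat \<Rightarrow> real) pmf" where
  "pair_aggregate q i j =
     (if q i + q j < 1 then
        map_pmf (\<lambda>b. if b then q(i := q i + q j, j := 0) else q(i := 0, j := q i + q j))
                (bernoulli_pmf (q i / (q i + q j)))
      else
        map_pmf (\<lambda>b. if b then q(i := 1, j := q i + q j - 1) else q(i := q i + q j - 1, j := 1))
                (bernoulli_pmf ((1 - q j) / (2 - q i - q j))))"

text \<open>A tie-breaking rule: for each current vector with at least two fractional
  entries it picks a pair of distinct fractional indices whose LCA is lowest.\<close>
definition valid_choice :: "'v set \<Rightarrow> ('v \<Rightarrow> 'v) \<Rightarrow> (nat \<Rightarrow> 'v) \<Rightarrow> nat \<Rightarrow>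
    ((nat \<Rightarrow> real) \<Rightarrow> nat \<times> nat) \<Rightarrow> bool" where
  "valid_choice V par lf n ch \<longleftrightarrow>
     (\<forall>q. card (frac n q) \<ge> 2 \<longrightarrow>
        (let i = fst (ch q); j = snd (ch q) in
          i \<in> frac n q \<and> j \<in> frac n q \<and> i \<noteq> j \<and>
          \<not> (\<exists>k\<in>frac n q. \<exists>l\<in>frac n q. k \<noteq> l \<and>
                 proper_desc par (lca V par lf k l) (lca V par lf i j))))"

text \<open>Run the loop with a fuel bound; each Pair-Aggregate makes at least one
  fractional entry integral, so fuel n suffices for termination.\<close>
primrec hs_run :: "((nat \<Rightarrow> real) \<Rightarrow> nat \<times> nat) \<Rightarrow> nat \<Rightarrow> nat \<Rightarrow> (nat \<Rightarrow> real)
    \<Rightarrow> (nat \<Rightarrow> real) pmf" where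
  "hs_run ch n 0 q = return_pmf q"
| "hs_run ch n (Suc k) q =
     (if card (frac n q) < 2 then return_pmf q
      else bind_pmf (pair_aggregate q (fst (ch q)) (snd (ch q))) (hs_run ch n k))"

definition hier_summarize :: "((nat \<Rightarrow> real) \<Rightarrow> nat \<times> nat) \<Rightarrow> nat \<Rightarrow> (nat \<Rightarrow> real)
    \<Rightarrow> nat set pmf" where
  "hier_summarize ch n p = map_pmf (\<lambda>q. {i\<in>{1..n}. q i = 1}) (hs_run ch n n p)"

definition varopt :: "nat \<Rightarrow> (nat \<Rightarrow> real) \<Rightarrow> nat set pmf \<Rightarrow> bool" where
  "varopt n p D \<longleftrightarrow>
     (\<forall>i\<in>{1..n}. measure_pmf.prob D {S. i \<in> S} = p i) \<and>
     (\<forall>S\<in>set_pmf D. real (card S) = (\<Sum>i\<in>{1..n}. p i)) \<and>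
     (\<forall>J. J \<subseteq> {1..n} \<longrightarrow>
        measure_pmf.prob D {S. J \<subseteq> S} \<le> (\<Prod>i\<in>J. p i) \<and>
        measure_pmf.prob D {S. J \<inter> S = {}} \<le> (\<Prod>i\<in>J. 1 - p i))"

end

theory Submission imports Defs begin

lemma anc_refl: "is_anc par v v"
  unfolding is_anc_def by (rule exI[of _ 0]) simp

lemma anc_trans: "is_anc par a b \<Longrightarrow> is_anc par b c \<Longrightarrow> is_anc par a c"
  unfolding is_anc_def by (metis funpow_add comp_apply)

lemma anc_chain: assumes "is_anc par a x" "is_anc par b x"
  shows "is_anc par a b \<or> is_anc par b a"
proof -
  obtain s t where s: "(par ^^ s) x = a" and t: "(par ^^ t) x = b"
    using assms unfolding is_anc_def by blast
  show ?thesis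
  proof (cases "s \<le> t")
    case True
    then have "(par ^^ (t - s)) a = b" using s t
      by (metis comp_apply funpow_add le_add_diff_inverse2)
    then show ?thesis unfolding is_anc_def by blast
  next
    case False
    then have "(par ^^ (s - t)) b = a" using s t
      by (metis comp_apply funpow_add le_add_diff_inverse2 nat_le_linear)
    then show ?thesis unfolding is_anc_def by blast
  qed
qed

lemma funpow_in_V: assumes "rooted_tree V r par" "v \<in> V" shows "(par ^^ k) v \<in> V"
proof (induction k)
  case 0 then show ?case using assms by simp
next
  case (Suc k) then show ?case using assms unfolding rooted_tree_def
    by (cases "(par ^^ k) v = r") auto
qed

lemma funpow_root: assumes "rooted_tree V r par" shows "(par ^^ k) r = r"
  using assms by (induction k) (auto simp: rooted_tree_def)

lemma anc_antisym: assumes tree: "rooted_tree V r par" and "b \<in> V"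
  and ab: "is_anc par a b" and ba: "is_anc par b a" shows "a = b"
proof -
  obtain s where s: "(par ^^ s) b = a" using ab unfolding is_anc_def by blast
  obtain t where t: "(par ^^ t) a = b" using ba unfolding is_anc_def by blast
  obtain c where c: "(par ^^ c) b = r" using tree \<open>b \<in> V\<close> unfolding rooted_tree_def is_anc_def by blast
  have per: "(par ^^ (m * (t + s))) b = b" for m
  proof (induction m)
    case 0 then show ?case by simp
  next
    case (Suc m)
    have e: "Suc m * (t + s) = m * (t+s) + (t + s)" by simp
    have "(par ^^ (Suc m * (t + s))) b = (par ^^ (m * (t+s))) ((par ^^ t) ((par ^^ s) b))"
      unfolding e funpow_add by simp
    also have "\<dots> = b" using s t Suc by simp
    finally show ?case .
  qed
  show ?thesis
  proof (cases "t + s = 0")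
    case True then show ?thesis using s by simp
  next
    case False
    then have "1 \<le> t + s" by presburger
    then have "c \<le> c * (t + s)" by simp
    then have "(par ^^ (c * (t + s))) b = (par ^^ (c * (t + s) - c)) ((par ^^ c) b)"
      by (metis comp_apply funpow_add le_add_diff_inverse2)
    then have "b = r" using per[of c] c funpow_root[OF tree] by simp
    then show ?thesis using s funpow_root[OF tree] by simp
  qed
qed

lemma lca_props:
  assumes tree: "rooted_tree V r par" and x: "lf i \<in> V" and y: "lf j \<in> V"
  shows "lca V par lf i j \<in> V \<and> is_anc par (lca V par lf i j) (lf i) \<and>
    is_anc par (lca V par lf i j) (lf j) \<and>
    (\<forall>u\<in>V. is_anc par u (lf i) \<and> is_anc par u (lf j) \<longrightarrow> is_anc par u (lca V par lf i j))"
proof -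
  define P where "P = (\<lambda>w. w \<in> V \<and> is_anc par w (lf i) \<and> is_anc par w (lf j) \<and>
      (\<forall>u\<in>V. is_anc par u (lf i) \<and> is_anc par u (lf j) \<longrightarrow> is_anc par u w))"
  obtain s0 where s0: "(par ^^ s0) (lf i) = r" using tree x unfolding rooted_tree_def is_anc_def by blast
  have "is_anc par r (lf j)" using tree y unfolding rooted_tree_def by blast
  then have ex: "\<exists>s. is_anc par ((par ^^ s) (lf i)) (lf j)" using s0 by (intro exI[of _ s0]) simp
  define s where "s = (LEAST s. is_anc par ((par ^^ s) (lf i)) (lf j))"
  have s1: "is_anc par ((par ^^ s) (lf i)) (lf j)" unfolding s_def using ex by (rule LeastI_ex)
  define w0 where "w0 = (par ^^ s) (lf i)"
  have Pw: "P w0" unfolding P_def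
  proof (intro conjI ballI impI)
    show "w0 \<in> V" unfolding w0_def using funpow_in_V[OF tree x] .
    show "is_anc par w0 (lf i)" unfolding is_anc_def w0_def by blast
    show "is_anc par w0 (lf j)" unfolding w0_def by (rule s1)
    fix u assume "u \<in> V" "is_anc par u (lf i) \<and> is_anc par u (lf j)"
    then obtain t where t: "(par ^^ t) (lf i) = u" "is_anc par u (lf j)" unfolding is_anc_def by blast
    then have "is_anc par ((par ^^ t) (lf i)) (lf j)" by simp
    then have "s \<le> t" unfolding s_def by (rule Least_le)
    then have "(par ^^ (t - s)) ((par ^^ s) (lf i)) = u" using t
      by (metis comp_apply funpow_add le_add_diff_inverse2)
    then show "is_anc par u w0" unfolding is_anc_def w0_def by blast
  qed
  have uniq: "w' = w0" if "P w'" for w'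
  proof -
    have 1: "is_anc par w' w0" using that Pw unfolding P_def by blast
    have 2: "is_anc par w0 w'" using that Pw unfolding P_def by blast
    have "w0 \<in> V" using Pw unfolding P_def by blast
    then show ?thesis using anc_antisym[OF tree _ 1 2] by blast
  qed
  have "P (THE w. P w)" by (rule theI[of P w0, OF Pw uniq])
  moreover have "lca V par lf i j = (THE w. P w)" unfolding lca_def P_def ..
  ultimately show ?thesis unfolding P_def by simp
qed

lemma crossing:
  assumes tree: "rooted_tree V r par" and lfV: "\<forall>i\<in>{1..n}. lf i \<in> V"
    and choice: "valid_choice V par lf n ch" and c2: "2 \<le> card (frac n q)"
    and v: "v \<in> V"
    and cr: "(fst (ch q) \<in> subtree_keys par lf n v) \<noteq> (snd (ch q) \<in> subtree_keys par lf n v)"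
  shows "card (frac n q \<inter> subtree_keys par lf n v) \<le> 1"
proof (rule ccontr)
  let ?R = "subtree_keys par lf n v"
  define i where "i = fst (ch q)"
  define j where "j = snd (ch q)"
  have ch: "i \<in> frac n q" "j \<in> frac n q" "i \<noteq> j"
    and nd: "\<not> (\<exists>k\<in>frac n q. \<exists>l\<in>frac n q. k \<noteq> l \<and>
                 proper_desc par (lca V par lf k l) (lca V par lf i j))"
    using choice c2 unfolding valid_choice_def i_def j_def Let_def by blast+
  assume "\<not> card (frac n q \<inter> ?R) \<le> 1"
  moreover have "finite (frac n q \<inter> ?R)" unfolding frac_def by auto
  ultimately have "\<not> (\<forall>a1\<in>frac n q \<inter> ?R. \<forall>a2\<in>frac n q \<inter> ?R. a1 = a2)"
    using card_le_Suc0_iff_eq[of "frac n q \<inter> ?R"] by simp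
  then obtain k l where kl: "k \<in> frac n q \<inter> ?R" "l \<in> frac n q \<inter> ?R" "k \<noteq> l"
    by blast
  have ijn: "i \<in> {1..n}" "j \<in> {1..n}" using ch unfolding frac_def by auto
  have kln: "k \<in> {1..n}" "l \<in> {1..n}" using kl unfolding frac_def by auto
  define w where "w = lca V par lf i j"
  define u where "u = lca V par lf k l"
  have wp: "is_anc par w (lf i)" "is_anc par w (lf j)"
    using lca_props[OF tree, of lf i j] lfV ijn unfolding w_def by auto
  have "is_anc par v (lf k)" "is_anc par v (lf l)" using kl unfolding subtree_keys_def by auto
  then have vu: "is_anc par v u"
    using lca_props[OF tree, of lf k l] lfV kln v unfolding u_def by auto
  have cr': "(i \<in> ?R) \<noteq> (j \<in> ?R)" using cr unfolding i_def j_def .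
  have "\<exists>a b. a \<in> ?R \<and> b \<notin> ?R \<and> is_anc par w (lf a) \<and> is_anc par w (lf b) \<and> b \<in> {1..n}"
  proof (cases "i \<in> ?R")
    case True
    then show ?thesis using cr' wp ijn by (intro exI[of _ i] exI[of _ j]) simp
  next
    case False
    then show ?thesis using cr' wp ijn by (intro exI[of _ j] exI[of _ i]) simp
  qed
  then obtain a b where ab: "a \<in> ?R" "b \<notin> ?R" "is_anc par w (lf a)" "is_anc par w (lf b)" "b \<in> {1..n}"
    by blast
  have va: "is_anc par v (lf a)" using ab unfolding subtree_keys_def by auto
  have nvw: "\<not> is_anc par v w"
  proof
    assume "is_anc par v w"
    then have "is_anc par v (lf b)" using anc_trans[OF _ ab(4)] by blast
    then show False using ab unfolding subtree_keys_def by auto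
  qed
  then have wv: "is_anc par w v" using anc_chain[OF va ab(3)] by blast
  have "proper_desc par u w" unfolding proper_desc_def
    using anc_trans[OF wv vu] vu nvw by auto
  then show False using nd kl unfolding u_def w_def by blast
qed

lemma pa_shape:
  assumes "0 < q i" "q i < 1" "0 < q j" "q j < 1"
    and "q' \<in> set_pmf (pair_aggregate q i j)"
  shows "\<exists>a b. q' = q(i := a, j := b) \<and> a + b = q i + q j \<and> 0 \<le> a \<and> a \<le> 1 \<and>
     0 \<le> b \<and> b \<le> 1 \<and> (a = 0 \<or> a = 1 \<or> b = 0 \<or> b = 1)"
proof (cases "q i + q j < 1")
  case True
  then have "q' = q(i := q i + q j, j := 0) \<or> q' = q(i := 0, j := q i + q j)"
    using assms(5) unfolding pair_aggregate_def by (auto split: if_splits)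
  then show ?thesis
  proof
    assume "q' = q(i := q i + q j, j := 0)"
    then show ?thesis using True assms by (intro exI[of _ "q i + q j"] exI[of _ 0]) auto
  next
    assume "q' = q(i := 0, j := q i + q j)"
    then show ?thesis using True assms by (intro exI[of _ 0] exI[of _ "q i + q j"]) auto
  qed
next
  case False
  then have "q' = q(i := 1, j := q i + q j - 1) \<or> q' = q(i := q i + q j - 1, j := 1)"
    using assms(5) unfolding pair_aggregate_def by (auto split: if_splits)
  then show ?thesis
  proof
    assume "q' = q(i := 1, j := q i + q j - 1)"
    then show ?thesis using False assms by (intro exI[of _ 1] exI[of _ "q i + q j - 1"]) auto
  next
    assume "q' = q(i := q i + q j - 1, j := 1)"
    then show ?thesis using False assms by (intro exI[of _ "q i + q j - 1"] exI[of _ 1]) auto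
  qed
qed

lemma finite_pa: "finite (set_pmf (pair_aggregate q i j))"
  unfolding pair_aggregate_def by auto

lemma finite_run: "finite (set_pmf (hs_run ch n k q))"
proof (induction k arbitrary: q)
  case 0 then show ?case by simp
next
  case (Suc k) then show ?case using finite_pa by (auto simp: set_bind_pmf)
qed

lemma sum_upd2:
  fixes q :: "nat \<Rightarrow> real"
  assumes "finite A" "i \<noteq> j"
  shows "(\<Sum>k\<in>A. (q(i := a, j := b)) k) = (\<Sum>k\<in>A. q k) + (if i \<in> A then a - q i else 0)
     + (if j \<in> A then b - q j else 0)"
proof -
  have "(\<Sum>k\<in>A. (q(i := a, j := b)) k) =
     (\<Sum>k\<in>A. q k + (if k = i then a - q i else 0) + (if k = j then b - q j else 0))"
  proof (rule sum.cong)
    fix k assume "k \<in> A"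
    show "(q(i := a, j := b)) k = q k + (if k = i then a - q i else 0) + (if k = j then b - q j else 0)"
      using assms by (cases "k = i"; cases "k = j") (simp_all add: algebra_simps)
  qed simp
  also have "\<dots> = (\<Sum>k\<in>A. q k) + (if i \<in> A then a - q i else 0) + (if j \<in> A then b - q j else 0)"
    unfolding sum.distrib using assms by (simp add: sum.delta)
  finally show ?thesis .
qed

lemma prod_upd2:
  assumes "finite J" "i \<noteq> j"
  shows "(\<Prod>k\<in>J. h ((q(i := a, j := b)) k)) = (\<Prod>k\<in>J - {i, j}. h (q k)) *
     (if i \<in> J then h a else 1) * (if j \<in> J then h b else 1)"
proof -
  have "(\<Prod>k\<in>J. h ((q(i := a, j := b)) k)) =
     (\<Prod>k\<in>J - (J \<inter> {i, j}). h ((q(i := a, j := b)) k)) * (\<Prod>k\<in>J \<inter> {i, j}. h ((q(i := a, j := b)) k))"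
    by (rule prod.subset_diff) (use assms in auto)
  also have "(\<Prod>k\<in>J - (J \<inter> {i, j}). h ((q(i := a, j := b)) k)) = (\<Prod>k\<in>J - {i, j}. h (q k))"
    by (rule prod.cong) auto
  also have "(\<Prod>k\<in>J \<inter> {i, j}. h ((q(i := a, j := b)) k)) =
       (if i \<in> J then h a else 1) * (if j \<in> J then h b else 1)"
    using assms by (cases "i \<in> J"; cases "j \<in> J") (auto simp: Int_insert_right)
  finally show ?thesis by (simp only: mult.assoc)
qed

lemma integral_bind_finite:
  fixes f :: "'b \<Rightarrow> real"
  assumes fM: "finite (set_pmf M)" and fN: "\<And>x. finite (set_pmf (N x))"
  shows "measure_pmf.expectation (bind_pmf M N) f =
    measure_pmf.expectation M (\<lambda>x. measure_pmf.expectation (N x) f)"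
proof -
  define B where "B = (\<Union>x\<in>set_pmf M. set_pmf (N x))"
  have fB: "finite B" unfolding B_def using fM fN by auto
  have "measure_pmf.expectation (bind_pmf M N) f = (\<Sum>y\<in>B. f y * pmf (bind_pmf M N) y)"
    by (rule integral_measure_pmf_real) (use fB in \<open>auto simp: B_def set_bind_pmf\<close>)
  also have "\<dots> = (\<Sum>y\<in>B. f y * (\<Sum>x\<in>set_pmf M. pmf (N x) y * pmf M x))"
    by (intro sum.cong refl arg_cong2[where f="(*)"], unfold pmf_bind)
       (rule integral_measure_pmf_real, use fM in auto)
  also have "\<dots> = (\<Sum>x\<in>set_pmf M. (\<Sum>y\<in>B. f y * pmf (N x) y) * pmf M x)"
    by (simp add: sum_distrib_left sum_distrib_right sum.swap[of _ B] mult.assoc)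
  also have "\<dots> = (\<Sum>x\<in>set_pmf M. measure_pmf.expectation (N x) f * pmf M x)"
    by (intro sum.cong refl arg_cong2[where f="(*)"] integral_measure_pmf_real[symmetric])
       (use fB in \<open>auto simp: B_def\<close>)
  also have "\<dots> = measure_pmf.expectation M (\<lambda>x. measure_pmf.expectation (N x) f)"
    by (rule integral_measure_pmf_real[symmetric]) (use fM in auto)
  finally show ?thesis .
qed

lemma exp_mono_supp:
  fixes f g :: "'b \<Rightarrow> real"
  assumes "finite (set_pmf M)" "\<And>x. x \<in> set_pmf M \<Longrightarrow> f x \<le> g x"
  shows "measure_pmf.expectation M f \<le> measure_pmf.expectation M g"
  by (rule integral_mono_AE[OF integrable_measure_pmf_finite integrable_measure_pmf_finite AE_pmfI])
     (use assms in auto)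

lemma run_inv:
  assumes step: "\<And>q q'. P q \<Longrightarrow> 2 \<le> card (frac n q) \<Longrightarrow>
      q' \<in> set_pmf (pair_aggregate q (fst (ch q)) (snd (ch q))) \<Longrightarrow> P q'"
  shows "P q \<Longrightarrow> q' \<in> set_pmf (hs_run ch n k q) \<Longrightarrow> P q'"
proof (induction k arbitrary: q)
  case 0 then show ?case by simp
next
  case (Suc k)
  show ?case
  proof (cases "card (frac n q) < 2")
    case True then show ?thesis using Suc by simp
  next
    case False
    then obtain q1 where q1: "q1 \<in> set_pmf (pair_aggregate q (fst (ch q)) (snd (ch q)))"
      "q' \<in> set_pmf (hs_run ch n k q1)" using Suc.prems by (auto simp: set_bind_pmf)
    have "P q1" using step[OF Suc.prems(1) _ q1(1)] False by simp
    then show ?thesis using Suc.IH q1(2) by blast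
  qed
qed

lemma run_exp:
  fixes F :: "(nat \<Rightarrow> real) \<Rightarrow> real"
  assumes step: "\<And>q q'. P q \<Longrightarrow> 2 \<le> card (frac n q) \<Longrightarrow>
      q' \<in> set_pmf (pair_aggregate q (fst (ch q)) (snd (ch q))) \<Longrightarrow> P q'"
    and stepE: "\<And>q. P q \<Longrightarrow> 2 \<le> card (frac n q) \<Longrightarrow>
      measure_pmf.expectation (pair_aggregate q (fst (ch q)) (snd (ch q))) F \<le> F q"
  shows "P q \<Longrightarrow> measure_pmf.expectation (hs_run ch n k q) F \<le> F q"
proof (induction k arbitrary: q)
  case 0 then show ?case by simp
next
  case (Suc k)
  show ?case
  proof (cases "card (frac n q) < 2")
    case True then show ?thesis by simp
  next
    case False
    let ?M = "pair_aggregate q (fst (ch q)) (snd (ch q))"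
    have "measure_pmf.expectation (hs_run ch n (Suc k) q) F =
        measure_pmf.expectation ?M (\<lambda>x. measure_pmf.expectation (hs_run ch n k x) F)"
      using False by (simp add: integral_bind_finite finite_pa finite_run)
    also have "\<dots> \<le> measure_pmf.expectation ?M F"
      by (rule exp_mono_supp[OF finite_pa]) (use Suc step False in auto)
    also have "\<dots> \<le> F q" using stepE Suc.prems False by simp
    finally show ?thesis .
  qed
qed

definition R1 :: "nat \<Rightarrow> (nat \<Rightarrow> real) \<Rightarrow> bool" where
  "R1 n q \<longleftrightarrow> (\<forall>k\<in>{1..n}. 0 \<le> q k \<and> q k \<le> 1)"

lemma step_shape:
  assumes choice: "valid_choice V par lf n ch" and r1: "R1 n q"
    and c2: "2 \<le> card (frac n q)"
    and q': "q' \<in> set_pmf (pair_aggregate q (fst (ch q)) (snd (ch q)))"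
  shows "\<exists>a b. q' = q(fst (ch q) := a, snd (ch q) := b) \<and> a + b = q (fst (ch q)) + q (snd (ch q)) \<and>
     0 \<le> a \<and> a \<le> 1 \<and> 0 \<le> b \<and> b \<le> 1 \<and> (a = 0 \<or> a = 1 \<or> b = 0 \<or> b = 1) \<and>
     fst (ch q) \<in> frac n q \<and> snd (ch q) \<in> frac n q \<and> fst (ch q) \<noteq> snd (ch q)"
proof -
  have ch: "fst (ch q) \<in> frac n q" "snd (ch q) \<in> frac n q" "fst (ch q) \<noteq> snd (ch q)"
    using choice c2 unfolding valid_choice_def Let_def by blast+
  then have "0 < q (fst (ch q))" "q (fst (ch q)) < 1" "0 < q (snd (ch q))" "q (snd (ch q)) < 1"
    unfolding frac_def by auto
  from pa_shape[OF this q'] obtain a b where ab: "q' = q(fst (ch q) := a, snd (ch q) := b)"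
    "a + b = q (fst (ch q)) + q (snd (ch q))" "0 \<le> a" "a \<le> 1" "0 \<le> b" "b \<le> 1"
    "a = 0 \<or> a = 1 \<or> b = 0 \<or> b = 1" by blast
  show ?thesis by (rule exI[of _ a], rule exI[of _ b]) (intro conjI ab ch)
qed

lemma sum01:
  assumes "finite A" "\<forall>k\<in>A. q k = 0 \<or> q k = 1"
  shows "sum q A = real (card {k\<in>A. q k = 1})"
proof -
  have "sum q A = (\<Sum>k\<in>A. if q k = 1 then 1 else 0)"
    by (rule sum.cong) (use assms in auto)
  also have "\<dots> = real (card {k\<in>A. q k = 1})"
  proof -
    have "A \<inter> {k. q k = 1} = {k\<in>A. q k = 1}" by blast
    then show ?thesis using assms(1) by (simp add: sum.If_cases)
  qed
  finally show ?thesis .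
qed

lemma fl_arith:
  fixes P y t :: real and z :: int
  assumes "real_of_int \<lfloor>P\<rfloor> \<le> z + y" "z + y \<le> real_of_int \<lceil>P\<rceil>" "0 < y" "y < 1" "0 \<le> t" "t \<le> 1"
  shows "real_of_int \<lfloor>P\<rfloor> \<le> z + t \<and> z + t \<le> real_of_int \<lceil>P\<rceil>"
proof -
  have "real_of_int \<lfloor>P\<rfloor> < real_of_int (z + 1)" using assms by simp
  then have a: "\<lfloor>P\<rfloor> \<le> z" by linarith
  have "real_of_int z < real_of_int \<lceil>P\<rceil>" using assms by simp
  then have b: "z + 1 \<le> \<lceil>P\<rceil>" by linarith
  have c: "real_of_int \<lfloor>P\<rfloor> \<le> real_of_int z" using a by simp
  have d: "real_of_int z + 1 \<le> real_of_int \<lceil>P\<rceil>" using b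
    by (metis of_int_add of_int_1 of_int_le_iff)
  from c d assms(5,6) show ?thesis by linarith
qed

lemma cross_sum:
  fixes P t :: real and q :: "nat \<Rightarrow> real"
  assumes R: "R \<subseteq> {1..n}" and r1: "R1 n q" and c: "c \<in> R" "c \<in> frac n q"
    and one: "\<forall>k\<in>frac n q \<inter> R. k = c"
    and bnd: "real_of_int \<lfloor>P\<rfloor> \<le> sum q R" "sum q R \<le> real_of_int \<lceil>P\<rceil>"
    and t: "0 \<le> t" "t \<le> 1"
  shows "real_of_int \<lfloor>P\<rfloor> \<le> sum q R + (t - q c) \<and> sum q R + (t - q c) \<le> real_of_int \<lceil>P\<rceil>"
proof -
  have fR: "finite R" using R finite_subset by blast
  have "\<forall>k\<in>R - {c}. q k = 0 \<or> q k = 1"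
  proof
    fix k assume k: "k \<in> R - {c}"
    then have "k \<notin> frac n q" using one by blast
    moreover have kn: "k \<in> {1..n}" using k R by blast
    ultimately have "\<not> (0 < q k \<and> q k < 1)" unfolding frac_def by blast
    moreover have "0 \<le> q k \<and> q k \<le> 1" using r1 kn unfolding R1_def by blast
    ultimately show "q k = 0 \<or> q k = 1" by auto
  qed
  then have m: "sum q (R - {c}) = real_of_int (int (card {k\<in>R - {c}. q k = 1}))"
    using sum01[of "R - {c}" q] fR by simp
  have sr: "sum q R = q c + sum q (R - {c})" using sum.remove[OF fR c(1)] .
  have qc: "0 < q c" "q c < 1" using c unfolding frac_def by auto
  define z where "z = int (card {k\<in>R - {c}. q k = 1})"
  have sr2: "sum q R = real_of_int z + q c" unfolding sr m z_def by simp
  have "real_of_int \<lfloor>P\<rfloor> \<le> real_of_int z + q c" "real_of_int z + q c \<le> real_of_int \<lceil>P\<rceil>"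
    using bnd sr2 by simp_all
  then show ?thesis using fl_arith[of P z "q c" t] qc t unfolding sr2 by linarith
qed

definition hf :: "bool \<Rightarrow> real \<Rightarrow> real" where
  "hf fl x = (if fl then 1 - x else x)"

lemma core1:
  fixes u w x :: real
  assumes "0 < u" "0 < w" "u + w < 1" "x = u / (u + w)"
  shows "(if mi then hf fl (u + w) else 1) * (if mj then hf fl 0 else 1) * x +
         (if mi then hf fl 0 else 1) * (if mj then hf fl (u + w) else 1) * (1 - x)
       \<le> (if mi then hf fl u else 1) * (if mj then hf fl w else 1)"
proof -
  have x: "x * u + x * w = u" using assms by (auto simp: field_simps)
  have uw: "0 \<le> u * w" using assms by simp
  show ?thesis
    using assms(1-3) x uw apply (cases fl; cases mi; cases mj) apply (simp_all add: hf_def algebra_simps)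
    done
qed

lemma core2:
  fixes u w y :: real
  assumes "u < 1" "w < 1" "1 \<le> u + w" "y = (1 - w) / (2 - u - w)"
  shows "(if mi then hf fl 1 else 1) * (if mj then hf fl (u + w - 1) else 1) * y +
         (if mi then hf fl (u + w - 1) else 1) * (if mj then hf fl 1 else 1) * (1 - y)
       \<le> (if mi then hf fl u else 1) * (if mj then hf fl w else 1)"
proof -
  have y: "y * 2 - y * u - y * w = 1 - w" using assms by (auto simp: field_simps)
  have p: "0 \<le> 1 - u - w + u * w" using mult_nonneg_nonneg[of "1 - u" "1 - w"] assms by (simp add: algebra_simps)
  show ?thesis
    using assms(1-3) y p apply (cases fl; cases mi; cases mj) apply (simp_all add: hf_def algebra_simps)
    done
qed

lemma step_R1:
  assumes choice: "valid_choice V par lf n ch" and r1: "R1 n q" and c2: "2 \<le> card (frac n q)"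
    and q': "q' \<in> set_pmf (pair_aggregate q (fst (ch q)) (snd (ch q)))"
  shows "R1 n q'"
proof -
  obtain a b where ab: "q' = q(fst (ch q) := a, snd (ch q) := b)" "0 \<le> a" "a \<le> 1" "0 \<le> b" "b \<le> 1"
    using step_shape[OF choice r1 c2 q'] by blast
  show ?thesis using r1 ab unfolding R1_def by auto
qed

lemma step_sum:
  assumes choice: "valid_choice V par lf n ch" and r1: "R1 n q" and c2: "2 \<le> card (frac n q)"
    and q': "q' \<in> set_pmf (pair_aggregate q (fst (ch q)) (snd (ch q)))"
  shows "sum q' {1..n} = sum q {1..n}"
proof -
  obtain a b where ab: "q' = q(fst (ch q) := a, snd (ch q) := b)"
    "a + b = q (fst (ch q)) + q (snd (ch q))"
    "fst (ch q) \<in> frac n q" "snd (ch q) \<in> frac n q" "fst (ch q) \<noteq> snd (ch q)"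
    using step_shape[OF choice r1 c2 q'] by blast
  have "fst (ch q) \<in> {1..n}" "snd (ch q) \<in> {1..n}" using ab unfolding frac_def by auto
  then show ?thesis unfolding ab(1) sum_upd2[OF finite_atLeastAtMost ab(5)] using ab(2) by simp
qed

lemma step_frac:
  assumes choice: "valid_choice V par lf n ch" and r1: "R1 n q" and c2: "2 \<le> card (frac n q)"
    and q': "q' \<in> set_pmf (pair_aggregate q (fst (ch q)) (snd (ch q)))"
  shows "card (frac n q') < card (frac n q)"
proof -
  define i where "i = fst (ch q)"
  define j where "j = snd (ch q)"
  obtain a b where ab: "q' = q(i := a, j := b)"
    "a = 0 \<or> a = 1 \<or> b = 0 \<or> b = 1"
    "i \<in> frac n q" "j \<in> frac n q" "i \<noteq> j"
    using step_shape[OF choice r1 c2 q'] unfolding i_def j_def by blast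
  have fin: "finite (frac n q)" unfolding frac_def by auto
  have "frac n q' \<subseteq> frac n q - {i} \<or> frac n q' \<subseteq> frac n q - {j}"
  proof (cases "a = 0 \<or> a = 1")
    case True
    then have "frac n q' \<subseteq> frac n q - {i}" using ab unfolding frac_def by auto
    then show ?thesis by blast
  next
    case False
    then have "b = 0 \<or> b = 1" using ab by blast
    then have "frac n q' \<subseteq> frac n q - {j}" using ab unfolding frac_def by auto
    then show ?thesis by blast
  qed
  moreover have "card (frac n q - {i}) < card (frac n q)" "card (frac n q - {j}) < card (frac n q)"
    using card_Diff1_less[OF fin] ab by auto
  ultimately show ?thesis using card_mono[of "frac n q - {i}"] card_mono[of "frac n q - {j}"] fin
    by (meson finite_Diff le_less_trans)
qed

lemma step_tree:
  fixes P :: real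
  assumes tree: "rooted_tree V r par" and lfV: "\<forall>i\<in>{1..n}. lf i \<in> V"
    and choice: "valid_choice V par lf n ch" and r1: "R1 n q" and c2: "2 \<le> card (frac n q)"
    and q': "q' \<in> set_pmf (pair_aggregate q (fst (ch q)) (snd (ch q)))"
    and v: "v \<in> V"
    and bnd: "real_of_int \<lfloor>P\<rfloor> \<le> sum q (subtree_keys par lf n v)"
       "sum q (subtree_keys par lf n v) \<le> real_of_int \<lceil>P\<rceil>"
  shows "real_of_int \<lfloor>P\<rfloor> \<le> sum q' (subtree_keys par lf n v) \<and>
       sum q' (subtree_keys par lf n v) \<le> real_of_int \<lceil>P\<rceil>"
proof -
  define R where "R = subtree_keys par lf n v"
  have Rn: "R \<subseteq> {1..n}" unfolding R_def subtree_keys_def by auto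
  have fR: "finite R" using Rn finite_subset by blast
  define i where "i = fst (ch q)"
  define j where "j = snd (ch q)"
  obtain a b where ab: "q' = q(i := a, j := b)" "a + b = q i + q j"
    "0 \<le> a" "a \<le> 1" "0 \<le> b" "b \<le> 1"
    "i \<in> frac n q" "j \<in> frac n q" "i \<noteq> j"
    using step_shape[OF choice r1 c2 q'] unfolding i_def j_def by blast
  have s': "sum q' R = sum q R + (if i \<in> R then a - q i else 0) + (if j \<in> R then b - q j else 0)"
    unfolding ab(1) by (rule sum_upd2[OF fR ab(9)])
  have bR: "real_of_int \<lfloor>P\<rfloor> \<le> sum q R" "sum q R \<le> real_of_int \<lceil>P\<rceil>" using bnd unfolding R_def by auto
  have "real_of_int \<lfloor>P\<rfloor> \<le> sum q' R \<and> sum q' R \<le> real_of_int \<lceil>P\<rceil>"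
  proof (cases "(i \<in> R) = (j \<in> R)")
    case True
    then have "sum q' R = sum q R" using s' ab(2) by auto
    then show ?thesis using bR by simp
  next
    case False
    have card1: "card (frac n q \<inter> R) \<le> 1"
      using crossing[OF tree lfV choice c2 v] False unfolding R_def i_def j_def by blast
    have fin: "finite (frac n q \<inter> R)" using fR by blast
    show ?thesis
    proof (cases "i \<in> R")
      case True
      then have jR: "j \<notin> R" using False by blast
      have one: "\<forall>k\<in>frac n q \<inter> R. k = i"
        using card1 card_le_Suc0_iff_eq[OF fin] True ab(7) by auto
      have "sum q' R = sum q R + (a - q i)" using s' True jR by simp
      then show ?thesis using cross_sum[OF Rn r1 True ab(7) one bR ab(3,4)] by simp
    next
      case iR: False
      then have jR: "j \<in> R" using False by blast
      have one: "\<forall>k\<in>frac n q \<inter> R. k = j"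
        using card1 card_le_Suc0_iff_eq[OF fin] jR ab(8) by auto
      have "sum q' R = sum q R + (b - q j)" using s' iR jR by simp
      then show ?thesis using cross_sum[OF Rn r1 jR ab(8) one bR ab(5,6)] by simp
    qed
  qed
  then show ?thesis unfolding R_def .
qed

lemma step_exp:
  assumes choice: "valid_choice V par lf n ch" and r1: "R1 n q" and c2: "2 \<le> card (frac n q)"
    and J: "J \<subseteq> {1..n}"
  shows "measure_pmf.expectation (pair_aggregate q (fst (ch q)) (snd (ch q)))
           (\<lambda>q'. \<Prod>k\<in>J. hf fl (q' k)) \<le> (\<Prod>k\<in>J. hf fl (q k))"
proof -
  define i where "i = fst (ch q)"
  define j where "j = snd (ch q)"
  have ch: "i \<in> frac n q" "j \<in> frac n q" "i \<noteq> j"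
    using choice c2 unfolding valid_choice_def Let_def i_def j_def by blast+
  define u where "u = q i"
  define w where "w = q j"
  have uw: "0 < u" "u < 1" "0 < w" "w < 1" using ch unfolding frac_def u_def w_def by auto
  have fJ: "finite J" using J finite_subset by blast
  define F where "F = (\<lambda>q' :: nat \<Rightarrow> real. \<Prod>k\<in>J. hf fl (q' k))"
  define Rr where "Rr = (\<Prod>k\<in>J - {i, j}. hf fl (q k))"
  have Rr: "0 \<le> Rr" unfolding Rr_def
  proof (rule prod_nonneg)
    fix k assume "k \<in> J - {i, j}"
    then have "0 \<le> q k \<and> q k \<le> 1" using J r1 unfolding R1_def by auto
    then show "0 \<le> hf fl (q k)" unfolding hf_def by auto
  qed
  define A where "A = (\<lambda>t. if i \<in> J then hf fl t else 1)"
  define B where "B = (\<lambda>t. if j \<in> J then hf fl t else 1)"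
  have Fab: "F (q(i := a, j := b)) = Rr * A a * B b" for a b
    unfolding F_def Rr_def A_def B_def by (rule prod_upd2[OF fJ ch(3)])
  have Fq: "F q = Rr * A u * B w" using Fab[of u w] unfolding u_def w_def by simp
  have PA: "pair_aggregate q (fst (ch q)) (snd (ch q)) = pair_aggregate q i j" unfolding i_def j_def ..
  have "measure_pmf.expectation (pair_aggregate q i j) F \<le> F q" unfolding Fq
  proof (cases "u + w < 1")
    case True
    define x where "x = u / (u + w)"
    have x01: "0 \<le> x" "x \<le> 1" unfolding x_def using uw True by auto
    have "measure_pmf.expectation (pair_aggregate q i j) F =
        F (q(i := u + w, j := 0)) * x + F (q(i := 0, j := u + w)) * (1 - x)"
      unfolding pair_aggregate_def using True x01 unfolding u_def w_def x_def by simp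
    also have "\<dots> = Rr * (A (u + w) * B 0 * x + A 0 * B (u + w) * (1 - x))"
      unfolding Fab by (simp add: algebra_simps)
    also have "\<dots> \<le> Rr * (A u * B w)"
      by (rule mult_left_mono[OF _ Rr]) (use core1[OF uw(1,3) True x_def] in \<open>simp add: A_def B_def\<close>)
    finally show "measure_pmf.expectation (pair_aggregate q i j) F \<le> Rr * A u * B w"
      by (simp add: mult.assoc)
  next
    case False
    define y where "y = (1 - w) / (2 - u - w)"
    have y01: "0 \<le> y" "y \<le> 1" unfolding y_def using uw False by (auto simp: field_simps)
    have "measure_pmf.expectation (pair_aggregate q i j) F =
        F (q(i := 1, j := u + w - 1)) * y + F (q(i := u + w - 1, j := 1)) * (1 - y)"
      unfolding pair_aggregate_def using False y01 unfolding u_def w_def y_def by simp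
    also have "\<dots> = Rr * (A 1 * B (u + w - 1) * y + A (u + w - 1) * B 1 * (1 - y))"
      unfolding Fab by (simp add: algebra_simps)
    also have "\<dots> \<le> Rr * (A u * B w)"
      by (rule mult_left_mono[OF _ Rr])
        (use core2[OF uw(2,4) _ y_def] False in \<open>simp add: A_def B_def\<close>)
    finally show "measure_pmf.expectation (pair_aggregate q i j) F \<le> Rr * A u * B w"
      by (simp add: mult.assoc)
  qed
  then show ?thesis unfolding PA F_def .
qed

lemma run_frac:
  assumes choice: "valid_choice V par lf n ch"
  shows "R1 n q \<Longrightarrow> card (frac n q) \<le> Suc k \<Longrightarrow> q' \<in> set_pmf (hs_run ch n k q) \<Longrightarrow>
    card (frac n q') \<le> 1"
proof (induction k arbitrary: q)
  case 0 then show ?case by simp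
next
  case (Suc k)
  show ?case
  proof (cases "card (frac n q) < 2")
    case True then show ?thesis using Suc.prems by simp
  next
    case False
    then obtain q1 where q1: "q1 \<in> set_pmf (pair_aggregate q (fst (ch q)) (snd (ch q)))"
      "q' \<in> set_pmf (hs_run ch n k q1)" using Suc.prems by (auto simp: set_bind_pmf)
    have c2: "2 \<le> card (frac n q)" using False by simp
    have "R1 n q1" using step_R1[OF choice Suc.prems(1) c2 q1(1)] .
    moreover have "card (frac n q1) \<le> Suc k"
      using step_frac[OF choice Suc.prems(1) c2 q1(1)] Suc.prems(2) by simp
    ultimately show ?thesis using Suc.IH q1(2) by blast
  qed
qed

lemma int_floor_ceil:
  fixes P :: real and c :: nat
  assumes "real_of_int \<lfloor>P\<rfloor> \<le> real c" "real c \<le> real_of_int \<lceil>P\<rceil>"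
  shows "(int c = \<lfloor>P\<rfloor> \<or> int c = \<lceil>P\<rceil>) \<and> \<bar>real c - P\<bar> < 1"
proof -
  have a: "\<lfloor>P\<rfloor> \<le> int c" using assms(1) by linarith
  have b: "int c \<le> \<lceil>P\<rceil>" using assms(2) by linarith
  have d: "\<lceil>P\<rceil> - \<lfloor>P\<rfloor> \<le> 1" by (rule ceiling_diff_floor_le_1)
  have e: "int c = \<lfloor>P\<rfloor> \<or> int c = \<lceil>P\<rceil>" using a b d by linarith
  have f1: "real_of_int \<lfloor>P\<rfloor> \<le> P \<and> P < real_of_int \<lfloor>P\<rfloor> + 1" using floor_correct[of P] by simp
  have f2: "real_of_int \<lceil>P\<rceil> - 1 < P \<and> P \<le> real_of_int \<lceil>P\<rceil>" using ceiling_correct[of P] by simp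
  have "\<bar>real c - P\<bar> < 1"
  proof (cases "int c = \<lfloor>P\<rfloor>")
    case True
    then have "real c = real_of_int \<lfloor>P\<rfloor>" by (metis of_int_of_nat_eq)
    then show ?thesis using f1 by linarith
  next
    case False
    then have "int c = \<lceil>P\<rceil>" using e by blast
    then have "real c = real_of_int \<lceil>P\<rceil>" by (metis of_int_of_nat_eq)
    then show ?thesis using f2 by linarith
  qed
  with e show ?thesis by blast
qed

lemma ints_01:
  fixes x :: real
  assumes "x \<in> \<int>" "0 < x" "x < 1" shows False
proof -
  obtain z where "x = of_int z" using assms(1) Ints_cases by blast
  then show False using assms by simp
qed

theorem mainTheorem2:
  fixes V :: "'v set" and r :: 'v and par :: "'v \<Rightarrow> 'v"
    and n :: nat and lf :: "nat \<Rightarrow> 'v" and p :: "nat \<Rightarrow> real"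
    and ch :: "(nat \<Rightarrow> real) \<Rightarrow> nat \<times> nat"
  assumes tree: "rooted_tree V r par"
    and leaves: "bij_betw lf {1..n} (tree_leaves V r par)"
    and p_range: "\<forall>i\<in>{1..n}. 0 \<le> p i \<and> p i \<le> 1"
    and p_int: "(\<Sum>i\<in>{1..n}. p i) \<in> \<int>"
    and choice: "valid_choice V par lf n ch"
  shows "varopt n p (hier_summarize ch n p)
    \<and> (\<forall>v\<in>V. \<forall>S\<in>set_pmf (hier_summarize ch n p).
          int (card (S \<inter> subtree_keys par lf n v)) = \<lfloor>\<Sum>i\<in>subtree_keys par lf n v. p i\<rfloor>
        \<or> int (card (S \<inter> subtree_keys par lf n v)) = \<lceil>\<Sum>i\<in>subtree_keys par lf n v. p i\<rceil>)
    \<and> (\<forall>v\<in>V. \<forall>S\<in>set_pmf (hier_summarize ch n p).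
          \<bar>real (card (S \<inter> subtree_keys par lf n v)) - (\<Sum>i\<in>subtree_keys par lf n v. p i)\<bar> < 1)"
proof -
  have lfV: "\<forall>i\<in>{1..n}. lf i \<in> V"
    using bij_betw_apply[OF leaves] unfolding tree_leaves_def by blast
  have r1p: "R1 n p" using p_range unfolding R1_def by blast
  define M where "M = hs_run ch n n p"
  define f where "f = (\<lambda>q :: nat \<Rightarrow> real. {i\<in>{1..n}. q i = 1})"
  have D: "hier_summarize ch n p = map_pmf f M" unfolding hier_summarize_def M_def f_def ..
  define Inv where "Inv = (\<lambda>q :: nat \<Rightarrow> real. R1 n q \<and> sum q {1..n} = sum p {1..n} \<and>
     (\<forall>v\<in>V. real_of_int \<lfloor>sum p (subtree_keys par lf n v)\<rfloor> \<le> sum q (subtree_keys par lf n v) \<and>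
        sum q (subtree_keys par lf n v) \<le> real_of_int \<lceil>sum p (subtree_keys par lf n v)\<rceil>))"
  have Inv_step: "Inv q'" if "Inv q" "2 \<le> card (frac n q)"
      "q' \<in> set_pmf (pair_aggregate q (fst (ch q)) (snd (ch q)))" for q q'
  proof -
    have r1: "R1 n q" using that(1) unfolding Inv_def by blast
    show ?thesis unfolding Inv_def
    proof (intro conjI ballI)
      show "R1 n q'" by (rule step_R1[OF choice r1 that(2,3)])
      show "sum q' {1..n} = sum p {1..n}" using step_sum[OF choice r1 that(2,3)] that(1)
        unfolding Inv_def by simp
      fix v assume v: "v \<in> V"
      have b: "real_of_int \<lfloor>sum p (subtree_keys par lf n v)\<rfloor> \<le> sum q (subtree_keys par lf n v)"
        "sum q (subtree_keys par lf n v) \<le> real_of_int \<lceil>sum p (subtree_keys par lf n v)\<rceil>"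
        using that(1) v unfolding Inv_def by auto
      from step_tree[OF tree lfV choice r1 that(2,3) v b]
      show "real_of_int \<lfloor>sum p (subtree_keys par lf n v)\<rfloor> \<le> sum q' (subtree_keys par lf n v)"
        "sum q' (subtree_keys par lf n v) \<le> real_of_int \<lceil>sum p (subtree_keys par lf n v)\<rceil>"
        by auto
    qed
  qed
  have Inv_p: "Inv p" unfolding Inv_def using r1p by auto
  have InvM: "Inv q" if q: "q \<in> set_pmf M" for q
  proof (rule run_inv[where P=Inv and n=n and ch=ch])
    fix q0 q1 assume "Inv q0" "2 \<le> card (frac n q0)"
      "q1 \<in> set_pmf (pair_aggregate q0 (fst (ch q0)) (snd (ch q0)))"
    then show "Inv q1" by (rule Inv_step)
  next
    show "Inv p" by (rule Inv_p)
    show "q \<in> set_pmf (hs_run ch n n p)" using q unfolding M_def .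
  qed
  have cardp: "card (frac n p) \<le> Suc n"
  proof -
    have "card (frac n p) \<le> card {1..n}" by (rule card_mono) (auto simp: frac_def)
    then show ?thesis by simp
  qed
  have frac1: "card (frac n q) \<le> 1" if "q \<in> set_pmf M" for q
    using run_frac[OF choice r1p cardp] that unfolding M_def by blast
  have int01: "\<forall>k\<in>{1..n}. q k = 0 \<or> q k = 1" if q: "q \<in> set_pmf M" for q
  proof -
    have iq: "Inv q" by (rule InvM[OF q])
    have r1: "R1 n q" using iq unfolding Inv_def by blast
    have "frac n q = {}"
    proof (rule ccontr)
      assume "frac n q \<noteq> {}"
      then obtain c where c: "c \<in> frac n q" by blast
      have fin: "finite (frac n q)" unfolding frac_def by auto
      have one: "\<forall>k\<in>frac n q. k = c" using frac1[OF q] card_le_Suc0_iff_eq[OF fin] c by auto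
      have cn: "c \<in> {1..n}" and qc: "0 < q c" "q c < 1" using c unfolding frac_def by auto
      have "\<forall>k\<in>{1..n} - {c}. q k = 0 \<or> q k = 1"
      proof
        fix k assume k: "k \<in> {1..n} - {c}"
        then have "k \<notin> frac n q" using one by blast
        then have "\<not> (0 < q k \<and> q k < 1)" using k unfolding frac_def by blast
        moreover have "0 \<le> q k \<and> q k \<le> 1" using r1 k unfolding R1_def by blast
        ultimately show "q k = 0 \<or> q k = 1" by auto
      qed
      then have m: "sum q ({1..n} - {c}) = real (card {k\<in>{1..n} - {c}. q k = 1})"
        using sum01[of "{1..n} - {c}" q] by simp
      have "sum q {1..n} = q c + sum q ({1..n} - {c})" using sum.remove[OF _ cn] by simp
      then have "q c = sum p {1..n} - real (card {k\<in>{1..n} - {c}. q k = 1})"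
        using iq m unfolding Inv_def by simp
      also have "\<dots> \<in> \<int>" using p_int by (intro Ints_diff) auto
      finally show False using ints_01 qc by blast
    qed
    then show ?thesis using r1 unfolding frac_def R1_def by force
  qed
  have fM: "finite (set_pmf M)" unfolding M_def by (rule finite_run)
  have Ebound: "measure_pmf.expectation M (\<lambda>q. \<Prod>k\<in>J. hf fl (q k)) \<le> (\<Prod>k\<in>J. hf fl (p k))"
    if J: "J \<subseteq> {1..n}" for J fl
    unfolding M_def
    by (rule run_exp[of "R1 n"])
       (use step_R1[OF choice] step_exp[OF choice _ _ J] r1p in auto)
  have hf_nonneg: "0 \<le> (\<Prod>k\<in>J. hf fl (q k))" if "J \<subseteq> {1..n}" "q \<in> set_pmf M" for J fl q
  proof (rule prod_nonneg)
    fix k assume "k \<in> J"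
    then have "0 \<le> q k \<and> q k \<le> 1" using InvM[OF that(2)] that(1) unfolding Inv_def R1_def by auto
    then show "0 \<le> hf fl (q k)" unfolding hf_def by auto
  qed
  have probJ: "measure_pmf.prob (hier_summarize ch n p) {S. J \<subseteq> S} \<le> (\<Prod>i\<in>J. p i)"
    if J: "J \<subseteq> {1..n}" for J
  proof -
    have "measure_pmf.prob (hier_summarize ch n p) {S. J \<subseteq> S} =
        measure_pmf.expectation M (indicator (f -` {S. J \<subseteq> S}))"
      unfolding D by simp
    also have "\<dots> \<le> measure_pmf.expectation M (\<lambda>q. \<Prod>k\<in>J. hf False (q k))"
    proof (rule exp_mono_supp[OF fM])
      fix q assume q: "q \<in> set_pmf M"
      show "indicator (f -` {S. J \<subseteq> S}) q \<le> (\<Prod>k\<in>J. hf False (q k))"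
      proof (cases "J \<subseteq> f q")
        case True
        then have "\<forall>k\<in>J. q k = 1" unfolding f_def by auto
        then have "(\<Prod>k\<in>J. hf False (q k)) = 1" unfolding hf_def by simp
        then show ?thesis using True by simp
      next
        case False
        then show ?thesis using hf_nonneg[OF J q, of False] by simp
      qed
    qed
    also have "\<dots> \<le> (\<Prod>k\<in>J. hf False (p k))" by (rule Ebound[OF J])
    also have "\<dots> = (\<Prod>i\<in>J. p i)" unfolding hf_def by simp
    finally show ?thesis .
  qed
  have probJc: "measure_pmf.prob (hier_summarize ch n p) {S. J \<inter> S = {}} \<le> (\<Prod>i\<in>J. 1 - p i)"
    if J: "J \<subseteq> {1..n}" for J
  proof -
    have "measure_pmf.prob (hier_summarize ch n p) {S. J \<inter> S = {}} =
        measure_pmf.expectation M (indicator (f -` {S. J \<inter> S = {}}))"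
      unfolding D by simp
    also have "\<dots> \<le> measure_pmf.expectation M (\<lambda>q. \<Prod>k\<in>J. hf True (q k))"
    proof (rule exp_mono_supp[OF fM])
      fix q assume q: "q \<in> set_pmf M"
      show "indicator (f -` {S. J \<inter> S = {}}) q \<le> (\<Prod>k\<in>J. hf True (q k))"
      proof (cases "J \<inter> f q = {}")
        case True
        have "\<forall>k\<in>J. q k \<noteq> 1"
        proof
          fix k assume k: "k \<in> J"
          then have "k \<in> {1..n}" using J by blast
          then show "q k \<noteq> 1" using True k unfolding f_def by blast
        qed
        then have "\<forall>k\<in>J. q k = 0" using int01[OF q] J by auto
        then have "(\<Prod>k\<in>J. hf True (q k)) = 1" unfolding hf_def by simp
        then show ?thesis using True by simp
      next
        case False
        then show ?thesis using hf_nonneg[OF J q, of True] by simp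
      qed
    qed
    also have "\<dots> \<le> (\<Prod>k\<in>J. hf True (p k))" by (rule Ebound[OF J])
    also have "\<dots> = (\<Prod>i\<in>J. 1 - p i)" unfolding hf_def by simp
    finally show ?thesis .
  qed
  have marg: "measure_pmf.prob (hier_summarize ch n p) {S. i \<in> S} = p i" if i: "i \<in> {1..n}" for i
  proof -
    have J: "{i} \<subseteq> {1..n}" using i by simp
    have 1: "measure_pmf.prob (hier_summarize ch n p) {S. i \<in> S} \<le> p i"
      using probJ[OF J] by simp
    have "measure_pmf.prob (hier_summarize ch n p) (UNIV - {S. i \<in> S}) \<le> 1 - p i"
      using probJc[OF J] by (simp add: set_diff_eq)
    then have 2: "1 - measure_pmf.prob (hier_summarize ch n p) {S. i \<in> S} \<le> 1 - p i"
      using measure_pmf.prob_compl[of "{S. i \<in> S}" "hier_summarize ch n p"] by simp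
    from 1 2 show ?thesis by linarith
  qed
  have suppS: "\<exists>q\<in>set_pmf M. S = f q" if "S \<in> set_pmf (hier_summarize ch n p)" for S
    using that unfolding D by auto
  have cardS: "real (card S) = (\<Sum>i\<in>{1..n}. p i)" if S: "S \<in> set_pmf (hier_summarize ch n p)" for S
  proof -
    obtain q where q: "q \<in> set_pmf M" "S = f q" using suppS[OF S] by blast
    have "sum q {1..n} = real (card {k\<in>{1..n}. q k = 1})" using sum01[OF _ int01[OF q(1)]] by simp
    then show ?thesis using InvM[OF q(1)] q(2) unfolding Inv_def f_def by simp
  qed
  have treeS: "(int (card (S \<inter> subtree_keys par lf n v)) = \<lfloor>\<Sum>i\<in>subtree_keys par lf n v. p i\<rfloor>
        \<or> int (card (S \<inter> subtree_keys par lf n v)) = \<lceil>\<Sum>i\<in>subtree_keys par lf n v. p i\<rceil>) \<and>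
      \<bar>real (card (S \<inter> subtree_keys par lf n v)) - (\<Sum>i\<in>subtree_keys par lf n v. p i)\<bar> < 1"
    if S: "S \<in> set_pmf (hier_summarize ch n p)" and v: "v \<in> V" for S v
  proof -
    obtain q where q: "q \<in> set_pmf M" "S = f q" using suppS[OF S] by blast
    define R where "R = subtree_keys par lf n v"
    have Rn: "R \<subseteq> {1..n}" unfolding R_def subtree_keys_def by auto
    have fR: "finite R" using Rn finite_subset by blast
    have SR: "S \<inter> R = {k\<in>R. q k = 1}" using q(2) Rn unfolding f_def by auto
    have "sum q R = real (card {k\<in>R. q k = 1})" using sum01[OF fR] int01[OF q(1)] Rn by auto
    then have eq: "sum q R = real (card (S \<inter> R))" unfolding SR .
    have "real_of_int \<lfloor>sum p R\<rfloor> \<le> real (card (S \<inter> R))" "real (card (S \<inter> R)) \<le> real_of_int \<lceil>sum p R\<rceil>"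
      using InvM[OF q(1)] v eq unfolding Inv_def R_def by auto
    from int_floor_ceil[OF this] show ?thesis unfolding R_def .
  qed
  have "varopt n p (hier_summarize ch n p)"
    unfolding varopt_def using marg cardS probJ probJc by blast
  then show ?thesis using treeS by blast
qed

end
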